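(* For every $p,p'\in(0,1]$, $\mathbf{C}_p(\mathbb{C}^3)=\mathbf{C}_{p'}(\mathbb{C}^3)$; and for every $p'\in(1,\infty)$ and $p\in(0,p')$, $\mathbf{C}_p(\mathbb{C}^3)\subseteq\mathbf{C}_{p'}(\mathbb{C}^3)$ and $\mathbf{C}_p(\mathbb{C}^3)\not\supseteq\mathbf{C}_{p'}(\mathbb{C}^3)$.
   Context: Observables are self-adjoint operators on $\mathbb{C}^3$; $A^T$ denotes the transpose, acting on the dual space, $(A^T\eta)(\varphi)=\eta(A\varphi)$. For a finite collection $\mathcal{A}=\{A_1,\dots,A_K\}$ of observables and $0<p<\infty$, $C_{\mathcal{A},p}=\sum_{k=1}^K|A_k\otimes I^T-I\otimes A_k^T|^p$, and $\mathbf{C}_p(\mathcal{H})=\{C_{\mathcal{A},p}:\ \mathcal{A}\text{ a finite collection of observables each with finite spectrum}\}$. *)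

theory Defs
  imports "HOL-Analysis.Analysis"
begin

text \<open>Operators on C^3 are 3x3 complex matrices (w.r.t. the standard basis);
operators on C^3 tensor (C^3)^* are matrices indexed by pairs (i,j), using the
product basis e_i tensor e_j^* (e_j^* the dual basis).\<close>

type_synonym op3 = "complex ^ 3 ^ 3"
type_synonym op33 = "complex ^ (3 \<times> 3) ^ (3 \<times> 3)"

definition adjoint_mat :: "complex ^ 'n ^ 'n \<Rightarrow> complex ^ 'n ^ 'n" where
  "adjoint_mat A = (\<chi> i j. cnj (A $ j $ i))"

definition self_adjoint :: "complex ^ 'n ^ 'n \<Rightarrow> bool" where
  "self_adjoint A \<longleftrightarrow> adjoint_mat A = A"

definition spectrum_mat :: "complex ^ 'n ^ 'n \<Rightarrow> complex set" where
  "spectrum_mat A = {c. \<exists>v. v \<noteq> 0 \<and> A *v v = c *s v}"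

definition kron :: "complex ^ 'n ^ 'n \<Rightarrow> complex ^ 'm ^ 'm \<Rightarrow> complex ^ ('n \<times> 'm) ^ ('n \<times> 'm)" where
  "kron A B = (\<chi> r s. A $ fst r $ fst s * B $ snd r $ snd s)"

text \<open>In the dual basis, the transpose A^T acting on the dual space has matrix transpose A.\<close>
definition comm_op :: "op3 \<Rightarrow> op33" where
  "comm_op A = kron A (mat 1) - kron (mat 1) (transpose A)"

text \<open>Functional calculus |X|^p for a self-adjoint (hence diagonalizable) X:
the operator acting as |\<lambda>|^p on each eigenspace of X (eigenvalue \<lambda>).\<close>
definition abs_powr :: "real \<Rightarrow> complex ^ 'n ^ 'n \<Rightarrow> complex ^ 'n ^ 'n" where
  "abs_powr p X = (THE M. \<forall>c v. X *v v = c *s v \<longrightarrow> M *v v = complex_of_real (cmod c powr p) *s v)"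

definition C_op :: "real \<Rightarrow> op3 list \<Rightarrow> op33" where
  "C_op p As = sum_list (map (\<lambda>A. abs_powr p (comm_op A)) As)"

definition C_set :: "real \<Rightarrow> op33 set" where
  "C_set p = {C_op p As | As. \<forall>A \<in> set As. self_adjoint A \<and> finite (spectrum_mat A)}"

end

theory Submission
  imports Defs
begin


definition cinner :: "complex^'n \<Rightarrow> complex^'n \<Rightarrow> complex" where
  "cinner x y = (\<Sum>i\<in>UNIV. cnj (x$i) * y$i)"

lemma cinner_add_right: "cinner x (y + z) = cinner x y + cinner x z"
  by (simp add: cinner_def distrib_left sum.distrib)
lemma cinner_add_left: "cinner (x + y) z = cinner x z + cinner y z"
  by (simp add: cinner_def distrib_right sum.distrib)
lemma cinner_diff_right: "cinner x (y - z) = cinner x y - cinner x z"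
  by (simp add: cinner_def right_diff_distrib sum_subtractf)
lemma cinner_diff_left: "cinner (x - y) z = cinner x z - cinner y z"
  by (simp add: cinner_def left_diff_distrib sum_subtractf)
lemma cinner_scale_right: "cinner x (c *s y) = c * cinner x y"
  by (simp add: cinner_def sum_distrib_left algebra_simps)
lemma cinner_scale_left: "cinner (c *s x) y = cnj c * cinner x y"
  by (simp add: cinner_def sum_distrib_left algebra_simps)
lemma cinner_cnj: "cnj (cinner x y) = cinner y x"
  by (simp add: cinner_def mult.commute)
lemma cinner_zero_right[simp]: "cinner x 0 = 0" by (simp add: cinner_def)
lemma cinner_zero_left[simp]: "cinner 0 x = 0" by (simp add: cinner_def)

lemma cinner_self: "cinner x x = of_real ((norm x)^2)"
proof -
  have "(norm x)^2 = (\<Sum>i\<in>UNIV. (cmod (x$i))^2)"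
    by (simp add: norm_vec_def L2_set_def sum_nonneg)
  moreover have "cnj (x$i) * x$i = of_real ((cmod (x$i))^2)" for i
    by (metis complex_norm_square mult.commute of_real_power)
  ultimately show ?thesis by (simp add: cinner_def)
qed

lemma cinner_self_eq_0: "cinner x x = 0 \<longleftrightarrow> x = 0"
  by (simp add: cinner_self)

lemma adjoint_cinner: "cinner (A *v x) y = cinner x (adjoint_mat A *v y)"
proof -
  have "cinner (A *v x) y = (\<Sum>i\<in>UNIV. \<Sum>j\<in>UNIV. cnj (A$i$j) * cnj (x$j) * y$i)"
    by (simp add: cinner_def matrix_vector_mult_def sum_distrib_right cnj_sum)
  also have "\<dots> = (\<Sum>j\<in>UNIV. \<Sum>i\<in>UNIV. cnj (A$i$j) * cnj (x$j) * y$i)"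
    by (rule sum.swap)
  also have "\<dots> = cinner x (adjoint_mat A *v y)"
    by (simp add: cinner_def matrix_vector_mult_def adjoint_mat_def sum_distrib_left algebra_simps)
  finally show ?thesis .
qed

lemma sa_cinner: "self_adjoint A \<Longrightarrow> cinner (A *v x) y = cinner x (A *v y)"
  by (simp add: adjoint_cinner self_adjoint_def)

lemma closed_cinner_eq: "closed {v::complex^'n. cinner u v = 0}"
proof -
  have "continuous_on UNIV (\<lambda>v::complex^'n. cinner u v)"
    unfolding cinner_def by (intro continuous_intros)
  then show ?thesis by (intro closed_Collect_eq) (auto intro: continuous_intros)
qed

lemma scaleR_as_s: "r *\<^sub>R (x::complex^'n) = (of_real r :: complex) *s x"
  by (simp add: vec_eq_iff) (simp add: scaleR_conv_of_real)

lemma norm_one_ne0: "norm (v::complex^'n) = 1 \<Longrightarrow> v \<noteq> 0" by auto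

lemma rayleigh:
  fixes A :: "complex^'n^'n" and F :: "(complex^'n) set"
  assumes sa: "self_adjoint A"
    and F: "\<forall>u\<in>F. \<exists>m::real. A *v u = of_real m *s u"
    and w0: "w0 \<noteq> 0" "\<forall>u\<in>F. cinner u w0 = 0"
  shows "\<exists>v m. norm v = 1 \<and> (\<forall>u\<in>F. cinner u v = 0) \<and> A *v v = of_real m *s v"
proof -
  define f where "f v = Re (cinner v (A *v v))" for v
  define K where "K = {v::complex^'n. norm v = 1 \<and> (\<forall>u\<in>F. cinner u v = 0)}"
  have "K = sphere 0 1 \<inter> (\<Inter>u\<in>F. {v. cinner u v = 0})"
    unfolding K_def by auto
  then have "closed K" by (auto intro!: closed_Int closed_INT closed_cinner_eq)
  moreover have "bounded K" unfolding K_def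
    by (rule bounded_subset[of "cball 0 1"]) auto
  ultimately have cK: "compact K" by (simp add: compact_eq_bounded_closed)
  have "norm ((1 / norm w0) *\<^sub>R w0) = 1" using w0 by simp
  moreover have "\<forall>u\<in>F. cinner u ((1 / norm w0) *\<^sub>R w0) = 0" using w0
    by (simp add: scaleR_as_s cinner_scale_right)
  ultimately have "(1 / norm w0) *\<^sub>R w0 \<in> K" by (simp add: K_def)
  then have Kne: "K \<noteq> {}" by auto
  have "continuous_on K f"
    unfolding f_def cinner_def matrix_vector_mult_def by (intro continuous_intros)
  then obtain v where vK: "v \<in> K" and vmax: "\<And>y. y \<in> K \<Longrightarrow> f y \<le> f v"
    using continuous_attains_sup[OF cK Kne] by blast
  have nv: "norm v = 1" and vF: "\<forall>u\<in>F. cinner u v = 0" using vK by (auto simp: K_def)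
  have fscale: "f (r *\<^sub>R x) = r^2 * f x" for r x
    by (simp add: f_def scaleR_as_s vector_scalar_commute cinner_scale_right cinner_scale_left
        power2_eq_square)
  have claim: "Re (cinner w (A *v v)) = 0" if wF: "\<forall>u\<in>F. cinner u w = 0" and wv: "cinner v w = 0" for w
  proof -
    define r where "r = Re (cinner w (A *v v))"
    define c where "c = f v * (norm w)^2 - f w"
    have key: "2 * t * r \<le> t^2 * c" for t :: real
    proof -
      define x where "x = v + of_real t *s w"
      have wv': "cinner w v = 0" using wv cinner_cnj[of v w] by simp
      have "cinner x x = cinner v v + of_real t * cinner v w + of_real t * cinner w v
          + of_real t * of_real t * cinner w w"
        by (simp add: x_def cinner_add_left cinner_add_right cinner_scale_left cinner_scale_right algebra_simps)
      then have "of_real ((norm x)^2) = (of_real (1 + t^2 * (norm w)^2) :: complex)"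
        using nv wv wv' by (simp add: cinner_self power2_eq_square)
      then have nx2: "(norm x)^2 = 1 + t^2 * (norm w)^2" using of_real_eq_iff by blast
      have "t^2 * (norm w)^2 \<ge> 0" by simp
      then have "(norm x)^2 > 0" using nx2 by linarith
      then have nxpos: "norm x > 0" by (simp add: zero_less_power2 del: zero_less_norm_iff) (use norm_ge_zero in auto)
      have "(1 / norm x) *\<^sub>R x \<in> K"
      proof -
        have "norm ((1 / norm x) *\<^sub>R x) = 1" using nxpos by simp
        moreover have "\<forall>u\<in>F. cinner u ((1 / norm x) *\<^sub>R x) = 0"
          using vF wF by (simp add: scaleR_as_s cinner_scale_right x_def cinner_add_right)
        ultimately show ?thesis by (simp add: K_def)
      qed
      then have "f ((1 / norm x) *\<^sub>R x) \<le> f v" by (rule vmax)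
      then have "f x / (norm x)^2 \<le> f v" by (simp add: fscale power_divide)
      then have le: "f x \<le> f v * (1 + t^2 * (norm w)^2)" using \<open>(norm x)^2 > 0\<close> nx2
        by (simp add: divide_le_eq)
      have sav: "Re (cinner v (A *v w)) = r"
      proof -
        have "cinner v (A *v w) = cinner (A *v v) w" using sa_cinner[OF sa] by simp
        also have "\<dots> = cnj (cinner w (A *v v))" using cinner_cnj by metis
        finally show ?thesis by (simp add: r_def)
      qed
      have "cinner x (A *v x) = cinner v (A *v v) + of_real t * cinner v (A *v w)
          + of_real t * cinner w (A *v v) + of_real t * of_real t * cinner w (A *v w)"
        by (simp add: x_def matrix_vector_right_distrib vector_scalar_commute
            cinner_add_left cinner_add_right cinner_scale_left cinner_scale_right algebra_simps)
      then have "f x = f v + 2 * t * r + t^2 * f w"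
        using sav by (simp add: f_def r_def power2_eq_square)
      with le show ?thesis by (simp add: c_def algebra_simps)
    qed
    define q where "q = \<bar>c\<bar> + 1"
    have cp: "q > 0" by (simp add: q_def)
    define t where "t = r / q"
    have "2 * t * r \<le> t^2 * c" by (rule key)
    then have "2 * t * r * q^2 \<le> t^2 * c * q^2"
      by (rule mult_right_mono) simp
    moreover have "2 * t * r * q^2 = 2 * r^2 * q"
      using cp by (simp add: t_def power2_eq_square field_simps)
    moreover have "t^2 * c * q^2 = r^2 * c"
      using cp by (simp add: t_def power2_eq_square field_simps)
    ultimately have "2 * r^2 * q \<le> r^2 * c" by linarith
    then have "r^2 * (2 * q - c) \<le> 0" by (simp add: algebra_simps)
    moreover have "2 * q - c > 0" unfolding q_def by (cases "c \<ge> 0") auto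
    ultimately have "r^2 \<le> 0" by (simp add: mult_le_0_iff)
    then show ?thesis by (simp add: r_def)
  qed
  have claim2: "cinner w (A *v v) = 0" if wF: "\<forall>u\<in>F. cinner u w = 0" and wv: "cinner v w = 0" for w
  proof -
    have 1: "Re (cinner w (A *v v)) = 0" using claim wF wv by blast
    have "Re (cinner (\<i> *s w) (A *v v)) = 0"
      using wF wv by (intro claim) (auto simp: cinner_scale_right)
    then have 2: "Im (cinner w (A *v v)) = 0" by (simp add: cinner_scale_left)
    from 1 2 show ?thesis by (simp add: complex_eq_iff)
  qed
  define cc where "cc = cinner v (A *v v)"
  define z where "z = A *v v - cc *s v"
  have vv: "cinner v v = 1" using nv by (simp add: cinner_self)
  have zF: "\<forall>u\<in>F. cinner u z = 0"
  proof
    fix u assume uF: "u \<in> F"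
    then obtain m :: real where Au: "A *v u = of_real m *s u" using F by blast
    have "cinner u (A *v v) = cinner (A *v u) v" using sa_cinner[OF sa] by simp
    also have "\<dots> = 0" using Au vF uF by (simp add: cinner_scale_left)
    finally show "cinner u z = 0" using vF uF by (simp add: z_def cinner_diff_right cinner_scale_right)
  qed
  have zv: "cinner v z = 0" by (simp add: z_def cinner_diff_right cinner_scale_right vv cc_def)
  have zv': "cinner z v = 0" using zv cinner_cnj[of v z] by simp
  have "cinner z (A *v v) = 0" using claim2 zF zv by blast
  moreover have "cinner z z = cinner z (A *v v) - cc * cinner z v"
    by (subst (2) z_def) (simp add: cinner_diff_right cinner_scale_right)
  ultimately have "cinner z z = 0" using zv' by simp
  then have "z = 0" by (simp add: cinner_self_eq_0)
  then have Av: "A *v v = cc *s v" by (simp add: z_def)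
  have "cc = cinner (A *v v) v" using sa_cinner[OF sa] by (simp add: cc_def)
  also have "\<dots> = cnj cc" using cinner_cnj by (metis cc_def)
  finally have "Im cc = 0" by (simp add: complex_eq_iff)
  then have "cc = of_real (Re cc)" by (simp add: complex_eq_iff)
  then have "A *v v = of_real (Re cc) *s v" using Av by simp
  then show ?thesis using nv vF by blast
qed



definition diagr :: "('n \<Rightarrow> real) \<Rightarrow> complex^'n^'n" where
  "diagr d = (\<chi> i j. if i = j then of_real (d i) else 0)"

definition unitary :: "complex^'n^'n \<Rightarrow> bool" where
  "unitary U \<longleftrightarrow> adjoint_mat U ** U = mat 1 \<and> U ** adjoint_mat U = mat 1"

lemma exists_orth:
  fixes a b :: "complex^3"
  shows "\<exists>x. x \<noteq> 0 \<and> cinner a x = 0 \<and> cinner b x = 0"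
proof -
  define M :: "complex^3^3" where
    "M = (\<chi> i j. if i = 1 then cnj (a$j) else if i = 2 then cnj (b$j) else 0)"
  have "row 3 M = 0" by (simp add: M_def row_def vec_eq_iff)
  then have "det M = 0" by (rule det_zero_row(2))
  then have "\<not> inj ((*v) M)"
    using det_nz_iff_inj_gen[of "(*v) M"] by simp
  then obtain x y where xy: "x \<noteq> y" "M *v x = M *v y" unfolding inj_def by blast
  define z where "z = x - y"
  have z0: "z \<noteq> 0" using xy by (simp add: z_def)
  have Mz: "M *v z = 0" using xy by (simp add: z_def matrix_vector_mult_diff_distrib)
  have "(M *v z) $ 1 = cinner a z" "(M *v z) $ 2 = cinner b z"
    by (simp_all add: M_def matrix_vector_mult_def cinner_def)
  with Mz z0 show ?thesis by auto
qed

lemma mat_entry_from_cinner: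
  "(adjoint_mat U ** U) $ k $ l = cinner (column k U) (column l U)"
  by (simp add: adjoint_mat_def matrix_matrix_mult_def cinner_def column_def)

lemma spectral3:
  fixes A :: op3
  assumes sa: "self_adjoint A"
  shows "\<exists>U d. unitary U \<and> A = U ** diagr d ** adjoint_mat U"
proof -
  have ax: "axis 1 1 \<noteq> (0::complex^3)" by (simp add: axis_def vec_eq_iff)
  obtain v1 m1 where v1: "norm v1 = 1" "A *v v1 = of_real m1 *s v1"
    using rayleigh[OF sa, of "{}" "axis 1 1"] ax by auto
  obtain x2 where "x2 \<noteq> 0" "cinner v1 x2 = 0" using exists_orth[of v1 v1] by blast
  then obtain v2 m2 where v2: "norm v2 = 1" "cinner v1 v2 = 0" "A *v v2 = of_real m2 *s v2"
    using rayleigh[OF sa, of "{v1}" x2] v1 by auto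
  obtain x3 where "x3 \<noteq> 0" "cinner v1 x3 = 0" "cinner v2 x3 = 0" using exists_orth[of v1 v2] by blast
  then obtain v3 m3 where v3: "norm v3 = 1" "cinner v1 v3 = 0" "cinner v2 v3 = 0" "A *v v3 = of_real m3 *s v3"
    using rayleigh[OF sa, of "{v1,v2}" x3] v1 v2 by auto
  define V where "V k = (if k = 1 then v1 else if k = 2 then v2 else v3)" for k :: 3
  define m where "m k = (if k = 1 then m1 else if k = 2 then m2 else m3)" for k :: 3
  have eig: "A *v V k = of_real (m k) *s V k" for k
    using v1 v2 v3 by (simp add: V_def m_def)
  have c21: "cinner v2 v1 = 0" using v2 cinner_cnj[of v1 v2] by simp
  have c31: "cinner v3 v1 = 0" using v3 cinner_cnj[of v1 v3] by simp
  have c32: "cinner v3 v2 = 0" using v3 cinner_cnj[of v2 v3] by simp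
  have nn: "cinner v v = 1" if "norm v = 1" for v using that by (simp add: cinner_self)
  have orth: "cinner (V k) (V l) = (if k = l then 1 else 0)" for k l
    using exhaust_3[of k] exhaust_3[of l] v1 v2 v3 c21 c31 c32 nn
    by (auto simp: V_def)
  define U :: op3 where "U = (\<chi> i k. V k $ i)"
  have colU: "column k U = V k" for k by (simp add: U_def column_def vec_eq_iff)
  have uu: "adjoint_mat U ** U = mat 1"
    by (simp add: vec_eq_iff mat_entry_from_cinner colU orth mat_def)
  then have uu2: "U ** adjoint_mat U = mat 1" using matrix_left_right_inverse by blast
  have AU: "A ** U = U ** diagr m"
  proof -
    have "(A ** U) $ i $ k = (U ** diagr m) $ i $ k" for i k
    proof -
      have "(A ** U) $ i $ k = (A *v V k) $ i"
        by (simp add: matrix_matrix_mult_def matrix_vector_mult_def U_def)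
      also have "\<dots> = of_real (m k) * V k $ i" by (simp add: eig)
      also have "\<dots> = (U ** diagr m) $ i $ k"
        by (simp add: matrix_matrix_mult_def diagr_def U_def if_distrib cong: if_cong)
      finally show ?thesis .
    qed
    then show ?thesis by (simp add: vec_eq_iff)
  qed
  have "A = A ** (U ** adjoint_mat U)" by (simp add: uu2)
  also have "\<dots> = U ** diagr m ** adjoint_mat U" by (simp add: matrix_mul_assoc AU)
  finally show ?thesis using uu uu2 unfolding unitary_def by blast
qed


definition diagc :: "('n \<Rightarrow> complex) \<Rightarrow> complex^'n^'n" where
  "diagc l = (\<chi> i j. if i = j then l i else 0)"

definition conjm :: "complex^'n^'m \<Rightarrow> complex^'n^'m" where
  "conjm U = (\<chi> i j. cnj (U$i$j))"

lemma matrix_sub_ldistrib: "(A::'a::ring_1^'n^'m) ** (B - C) = A ** B - A ** C"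
  by (simp add: vec_eq_iff matrix_matrix_mult_def sum_subtractf algebra_simps)
lemma matrix_sub_rdistrib: "((B::'a::ring_1^'n^'m) - C) ** A = B ** A - C ** A"
  by (simp add: vec_eq_iff matrix_matrix_mult_def sum_subtractf algebra_simps)
lemma matrix_add_rdistrib: "((B::'a::ring_1^'n^'m) + C) ** A = B ** A + C ** A"
  by (simp add: vec_eq_iff matrix_matrix_mult_def sum.distrib algebra_simps)

lemma axis_col: "((A::'a::semiring_1^'n^'m) *v axis r 1) $ i = A $ i $ r"
  by (simp add: matrix_vector_mult_def axis_def mult.commute if_distrib cong: if_cong)

lemma matrix_eq_axis:
  assumes "\<And>r. (A::'a::semiring_1^'n^'m) *v axis r 1 = B *v axis r 1"
  shows "A = B"
proof -
  have "A $ i $ r = B $ i $ r" for i r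
    using assms[of r] axis_col[of A r i] axis_col[of B r i] by simp
  then show ?thesis by (simp add: vec_eq_iff)
qed

lemma if_mult_zero: "(if P then a else 0) * (b::'a::mult_zero) = (if P then a * b else 0)" by simp

lemma diagc_mult_vec: "(diagc l *v u) $ r = l r * u $ r"
  by (simp add: diagc_def matrix_vector_mult_def if_mult_zero)

lemma diagc_axis: "diagc l *v axis r 1 = l r *s axis r 1"
  by (simp add: vec_eq_iff diagc_mult_vec axis_def)

lemma abs_powr_conj:
  fixes W :: "complex^'n^'n"
  assumes u: "unitary W"
  shows "abs_powr p (W ** diagc l ** adjoint_mat W)
       = W ** diagc (\<lambda>r. of_real (cmod (l r) powr p)) ** adjoint_mat W"
proof -
  have u1: "adjoint_mat W ** W = mat 1" and u2: "W ** adjoint_mat W = mat 1"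
    using u by (auto simp: unitary_def)
  define X where "X = W ** diagc l ** adjoint_mat W"
  define M0 where "M0 = W ** diagc (\<lambda>r. of_real (cmod (l r) powr p)) ** adjoint_mat W"
  define P where "P M \<longleftrightarrow> (\<forall>c v. X *v v = c *s v \<longrightarrow> M *v v = complex_of_real (cmod c powr p) *s v)"
    for M :: "complex^'n^'n"
  have PM0: "P M0" unfolding P_def
  proof (intro allI impI)
    fix c v assume Xv: "X *v v = c *s v"
    define u where "u = adjoint_mat W *v v"
    have "adjoint_mat W *v (X *v v) = diagc l *v u"
      by (simp add: X_def u_def matrix_vector_mul_assoc matrix_mul_assoc u1)
    then have du: "diagc l *v u = c *s u"
      by (simp add: Xv u_def vector_scalar_commute)
    have "diagc (\<lambda>r. of_real (cmod (l r) powr p)) *v u = of_real (cmod c powr p) *s u"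
    proof -
      have "of_real (cmod (l r) powr p) * u $ r = of_real (cmod c powr p) * u $ r" for r
      proof (cases "u $ r = 0")
        case False
        have "l r * u $ r = c * u $ r" by (metis du diagc_mult_vec vector_smult_component)
        then have "l r = c" using False by auto
        then show ?thesis by simp
      qed simp
      then show ?thesis by (simp add: vec_eq_iff diagc_mult_vec)
    qed
    then have "M0 *v v = W *v (of_real (cmod c powr p) *s u)"
      by (simp add: M0_def u_def matrix_vector_mul_assoc[symmetric])
    also have "\<dots> = of_real (cmod c powr p) *s v"
      by (simp add: vector_scalar_commute u_def matrix_vector_mul_assoc u2)
    finally show "M0 *v v = of_real (cmod c powr p) *s v" .
  qed
  have uniq: "M = M0" if PM: "P M" for M
  proof -
    have "(M ** W) *v axis r 1 = (M0 ** W) *v axis r 1" for r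
    proof -
      define e where "e = W *v axis r 1"
      have "X *v e = W *v (diagc l *v axis r 1)"
        by (simp add: X_def e_def matrix_vector_mul_assoc matrix_mul_assoc)
           (simp add: matrix_mul_assoc[symmetric] u1)
      then have Xe: "X *v e = l r *s e" by (simp add: diagc_axis vector_scalar_commute e_def)
      have "M *v e = M0 *v e" using PM PM0 Xe unfolding P_def by metis
      then show ?thesis by (simp add: e_def matrix_vector_mul_assoc)
    qed
    then have "M ** W = M0 ** W" by (rule matrix_eq_axis)
    then have "M ** W ** adjoint_mat W = M0 ** W ** adjoint_mat W" by simp
    then show ?thesis by (simp add: matrix_mul_assoc[symmetric] u2)
  qed
  have "abs_powr p X = M0"
    unfolding abs_powr_def P_def[symmetric] using PM0 uniq by (rule the_equality)
  then show ?thesis by (simp add: X_def M0_def)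
qed


lemma kron_mult: "kron A B ** kron C D = kron (A ** C) (B ** D)"
proof -
  have "(kron A B ** kron C D) $ r $ s = (kron (A ** C) (B ** D)) $ r $ s" for r s
  proof -
    have "(kron A B ** kron C D) $ r $ s = (\<Sum>q\<in>UNIV \<times> UNIV.
        A$fst r$fst q * C$fst q$fst s * (B$snd r$snd q * D$snd q$snd s))"
      by (simp add: kron_def matrix_matrix_mult_def UNIV_Times_UNIV mult_ac)
    also have "\<dots> = (\<Sum>a\<in>UNIV. \<Sum>b\<in>UNIV. A$fst r$a * C$a$fst s * (B$snd r$b * D$b$snd s))"
      by (simp add: sum.cartesian_product split_def)
    also have "\<dots> = (\<Sum>a\<in>UNIV. A$fst r$a * C$a$fst s) * (\<Sum>b\<in>UNIV. B$snd r$b * D$b$snd s)"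
      by (simp add: sum_product)
    also have "\<dots> = (kron (A ** C) (B ** D)) $ r $ s"
      by (simp add: kron_def matrix_matrix_mult_def)
    finally show ?thesis .
  qed
  then show ?thesis by (simp add: vec_eq_iff)
qed

lemma adjoint_kron: "adjoint_mat (kron A B) = kron (adjoint_mat A) (adjoint_mat B)"
  by (simp add: vec_eq_iff adjoint_mat_def kron_def)

lemma kron_mat1: "kron (mat 1) (mat 1) = mat 1"
  by (auto simp: vec_eq_iff kron_def mat_def prod_eq_iff)

lemma conjm_mult: "conjm (A ** B) = conjm A ** conjm B"
  by (simp add: vec_eq_iff conjm_def matrix_matrix_mult_def)

lemma adjoint_conjm: "adjoint_mat (conjm U) = conjm (adjoint_mat U)"
  by (simp add: vec_eq_iff conjm_def adjoint_mat_def)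

lemma conjm_mat1: "conjm (mat 1) = mat 1"
  by (simp add: vec_eq_iff conjm_def mat_def)

lemma unitary_conjm: "unitary U \<Longrightarrow> unitary (conjm U)"
  unfolding unitary_def adjoint_conjm by (metis conjm_mult conjm_mat1)

lemma unitary_kron: "unitary U \<Longrightarrow> unitary V \<Longrightarrow> unitary (kron U V)"
  unfolding unitary_def adjoint_kron kron_mult by (simp add: kron_mat1)

lemma udu_entry: "(U ** diagr d ** adjoint_mat U) $ i $ j = (\<Sum>k\<in>UNIV. U$i$k * of_real (d k) * cnj (U$j$k))"
proof -
  have "(U ** diagr d) $ i $ k = U$i$k * of_real (d k)" for k
    by (simp add: matrix_matrix_mult_def diagr_def if_distrib cong: if_cong)
  then show ?thesis by (simp add: matrix_matrix_mult_def adjoint_mat_def)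
qed

lemma transpose_udu: "transpose (U ** diagr d ** adjoint_mat U) = conjm U ** diagr d ** adjoint_mat (conjm U)"
  by (simp add: vec_eq_iff transpose_def udu_entry conjm_def mult_ac)

lemma kron_diag_diff: "kron (diagr d) (mat 1) - kron (mat 1) (diagr d) = diagc (\<lambda>q. of_real (d (fst q) - d (snd q)))"
  by (auto simp: vec_eq_iff kron_def diagr_def diagc_def mat_def prod_eq_iff)

lemma comm_op_udu:
  assumes u: "unitary U"
  shows "comm_op (U ** diagr d ** adjoint_mat U) = kron U (conjm U) ** diagc (\<lambda>q. of_real (d (fst q) - d (snd q))) ** adjoint_mat (kron U (conjm U))"
proof -
  let ?V = "conjm U"
  have u2: "U ** adjoint_mat U = mat 1" using u by (simp add: unitary_def)
  have v2: "?V ** adjoint_mat ?V = mat 1" using unitary_conjm[OF u] by (simp add: unitary_def)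
  have e1: "kron (U ** diagr d ** adjoint_mat U) (mat 1) = kron U ?V ** kron (diagr d) (mat 1) ** adjoint_mat (kron U ?V)"
  proof -
    have "kron (U ** diagr d ** adjoint_mat U) (mat 1) = kron (U ** diagr d ** adjoint_mat U) (?V ** mat 1 ** adjoint_mat ?V)"
      by (simp add: v2)
    also have "\<dots> = kron U ?V ** kron (diagr d) (mat 1) ** adjoint_mat (kron U ?V)"
      by (simp add: kron_mult adjoint_kron)
    finally show ?thesis .
  qed
  have e2: "kron (mat 1) (transpose (U ** diagr d ** adjoint_mat U)) = kron U ?V ** kron (mat 1) (diagr d) ** adjoint_mat (kron U ?V)"
  proof -
    have "kron (mat 1) (transpose (U ** diagr d ** adjoint_mat U)) = kron (U ** mat 1 ** adjoint_mat U) (?V ** diagr d ** adjoint_mat ?V)"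
      by (simp add: u2 transpose_udu)
    also have "\<dots> = kron U ?V ** kron (mat 1) (diagr d) ** adjoint_mat (kron U ?V)"
      by (simp add: kron_mult adjoint_kron)
    finally show ?thesis .
  qed
  show ?thesis
    unfolding comm_op_def e1 e2 kron_diag_diff[symmetric]
    by (simp add: matrix_sub_ldistrib matrix_sub_rdistrib)
qed

definition Gm :: "op3 \<Rightarrow> (3 \<times> 3 \<Rightarrow> real) \<Rightarrow> op33" where
  "Gm U g = kron U (conjm U) ** diagc (\<lambda>q. of_real (g q)) ** adjoint_mat (kron U (conjm U))"

lemma Tp:
  assumes u: "unitary (U::op3)"
  shows "abs_powr p (comm_op (U ** diagr d ** adjoint_mat U)) = Gm U (\<lambda>q. \<bar>d (fst q) - d (snd q)\<bar> powr p)"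
  unfolding comm_op_udu[OF u] Gm_def
  by (simp add: abs_powr_conj[OF unitary_kron[OF u unitary_conjm[OF u]]] of_real_diff[symmetric]
      del: of_real_diff)


lemma powr_subadd:
  fixes u v q :: real
  assumes q: "0 < q" "q \<le> 1" and uv: "0 \<le> u" "0 \<le> v"
  shows "(u + v) powr q \<le> u powr q + v powr q"
proof (cases "u + v = 0")
  case True
  then have "u = 0" "v = 0" using uv by auto
  then show ?thesis by simp
next
  case False
  define s where "s = u + v"
  have s: "s > 0" using False uv by (simp add: s_def)
  have a: "u / s \<le> (u / s) powr q"
  proof -
    have "(u / s) powr 1 \<le> (u / s) powr q"
      by (rule powr_mono') (use q uv s in \<open>auto simp: s_def\<close>)
    then show ?thesis using uv s by simp
  qed
  have b: "v / s \<le> (v / s) powr q"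
  proof -
    have "(v / s) powr 1 \<le> (v / s) powr q"
      by (rule powr_mono') (use q uv s in \<open>auto simp: s_def\<close>)
    then show ?thesis using uv s by simp
  qed
  have "1 = u / s + v / s" using s by (simp add: s_def add_divide_distrib[symmetric])
  also have "\<dots> \<le> (u / s) powr q + (v / s) powr q" using a b by simp
  also have "\<dots> = (u powr q + v powr q) / s powr q"
    using uv s by (simp add: powr_divide add_divide_distrib)
  finally have "s powr q \<le> u powr q + v powr q" using s by (simp add: le_divide_eq)
  then show ?thesis by (simp add: s_def)
qed

lemma powr_convex2:
  fixes u v p :: real
  assumes p: "1 \<le> p" and uv: "0 \<le> u" "0 \<le> v"
  shows "(u + v) powr p \<le> 2 powr (p - 1) * (u powr p + v powr p)"
proof -
  have two: "2 powr (p - 1) \<ge> 1" using p by (simp add: ge_one_powr_ge_zero)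
  consider "u = 0" | "v = 0" | "u > 0" "v > 0" using uv by fastforce
  then show ?thesis
  proof cases
    case 1
    then show ?thesis using two by (simp add: mult_le_cancel_right1)
  next
    case 2
    then show ?thesis using two by (simp add: mult_le_cancel_right1)
  next
    case 3
    have "((1 - 1/2) *\<^sub>R u + (1/2) *\<^sub>R v) powr p \<le> (1 - 1/2) * u powr p + (1/2) * v powr p"
      by (rule convex_onD[OF powr_convex[OF p]]) (use 3 in auto)
    then have "((u + v) / 2) powr p \<le> (u powr p + v powr p) / 2"
      by (simp add: field_simps)
    moreover have "((u + v) / 2) powr p = (u + v) powr p / 2 powr p"
      using 3 by (simp add: powr_divide)
    moreover have "2 powr p = 2 * 2 powr (p - 1)"
      by (simp add: powr_diff)
    ultimately show ?thesis by (simp add: field_simps)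
  qed
qed

definition Kc :: "real \<Rightarrow> real" where "Kc p = max 1 (2 powr (p - 1))"

lemma tri_powr:
  fixes x y z p :: real
  assumes p: "0 < p"
  shows "\<bar>x - z\<bar> powr p \<le> Kc p * (\<bar>x - y\<bar> powr p + \<bar>y - z\<bar> powr p)"
proof -
  have "\<bar>x - z\<bar> powr p \<le> (\<bar>x - y\<bar> + \<bar>y - z\<bar>) powr p"
    by (rule powr_mono2) (use p in auto)
  also have "\<dots> \<le> Kc p * (\<bar>x - y\<bar> powr p + \<bar>y - z\<bar> powr p)"
  proof (cases "p \<le> 1")
    case True
    have "(\<bar>x - y\<bar> + \<bar>y - z\<bar>) powr p \<le> 1 * (\<bar>x - y\<bar> powr p + \<bar>y - z\<bar> powr p)"
      using powr_subadd[OF p True] by simp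
    also have "\<dots> \<le> Kc p * (\<bar>x - y\<bar> powr p + \<bar>y - z\<bar> powr p)"
      by (rule mult_right_mono) (auto simp: Kc_def)
    finally show ?thesis .
  next
    case False
    have "(\<bar>x - y\<bar> + \<bar>y - z\<bar>) powr p \<le> 2 powr (p - 1) * (\<bar>x - y\<bar> powr p + \<bar>y - z\<bar> powr p)"
      using powr_convex2 False by simp
    also have "\<dots> \<le> Kc p * (\<bar>x - y\<bar> powr p + \<bar>y - z\<bar> powr p)"
      by (rule mult_right_mono) (auto simp: Kc_def)
    finally show ?thesis .
  qed
  finally show ?thesis .
qed

definition ach :: "real \<Rightarrow> real \<Rightarrow> real \<Rightarrow> real \<Rightarrow> bool" where
  "ach p x y z \<longleftrightarrow> (\<exists>es :: (real \<times> real \<times> real) list.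
     x = sum_list (map (\<lambda>(a,b,c). \<bar>a - b\<bar> powr p) es) \<and>
     y = sum_list (map (\<lambda>(a,b,c). \<bar>a - c\<bar> powr p) es) \<and>
     z = sum_list (map (\<lambda>(a,b,c). \<bar>b - c\<bar> powr p) es))"

lemma ach_add: "ach p x y z \<Longrightarrow> ach p x' y' z' \<Longrightarrow> ach p (x + x') (y + y') (z + z')"
  unfolding ach_def
proof (elim exE conjE)
  fix es es' :: "(real \<times> real \<times> real) list"
  assume h: "x = sum_list (map (\<lambda>(a,b,c). \<bar>a - b\<bar> powr p) es)"
    "y = sum_list (map (\<lambda>(a,b,c). \<bar>a - c\<bar> powr p) es)"
    "z = sum_list (map (\<lambda>(a,b,c). \<bar>b - c\<bar> powr p) es)"
    and h': "x' = sum_list (map (\<lambda>(a,b,c). \<bar>a - b\<bar> powr p) es')"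
    "y' = sum_list (map (\<lambda>(a,b,c). \<bar>a - c\<bar> powr p) es')"
    "z' = sum_list (map (\<lambda>(a,b,c). \<bar>b - c\<bar> powr p) es')"
  show "\<exists>es :: (real \<times> real \<times> real) list.
     x + x' = sum_list (map (\<lambda>(a,b,c). \<bar>a - b\<bar> powr p) es) \<and>
     y + y' = sum_list (map (\<lambda>(a,b,c). \<bar>a - c\<bar> powr p) es) \<and>
     z + z' = sum_list (map (\<lambda>(a,b,c). \<bar>b - c\<bar> powr p) es)"
    by (rule exI[of _ "es @ es'"]) (simp add: h h')
qed

lemma ach_swap23: "ach p x y z \<Longrightarrow> ach p x z y"
  unfolding ach_def
proof (elim exE conjE)
  fix es :: "(real \<times> real \<times> real) list"
  assume h: "x = sum_list (map (\<lambda>(a,b,c). \<bar>a - b\<bar> powr p) es)"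
    "y = sum_list (map (\<lambda>(a,b,c). \<bar>a - c\<bar> powr p) es)"
    "z = sum_list (map (\<lambda>(a,b,c). \<bar>b - c\<bar> powr p) es)"
  let ?es = "map (\<lambda>(a,b,c). (b,a,c)) es"
  have "x = sum_list (map (\<lambda>(a,b,c). \<bar>a - b\<bar> powr p) ?es)"
    unfolding h by (simp add: comp_def split_def abs_minus_commute)
  moreover have "z = sum_list (map (\<lambda>(a,b,c). \<bar>a - c\<bar> powr p) ?es)"
    unfolding h by (simp add: comp_def split_def)
  moreover have "y = sum_list (map (\<lambda>(a,b,c). \<bar>b - c\<bar> powr p) ?es)"
    unfolding h by (simp add: comp_def split_def)
  ultimately show "\<exists>es :: (real \<times> real \<times> real) list.
     x = sum_list (map (\<lambda>(a,b,c). \<bar>a - b\<bar> powr p) es) \<and>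
     z = sum_list (map (\<lambda>(a,b,c). \<bar>a - c\<bar> powr p) es) \<and>
     y = sum_list (map (\<lambda>(a,b,c). \<bar>b - c\<bar> powr p) es)" by blast
qed

lemma ach_swap12: "ach p x y z \<Longrightarrow> ach p y x z"
  unfolding ach_def
proof (elim exE conjE)
  fix es :: "(real \<times> real \<times> real) list"
  assume h: "x = sum_list (map (\<lambda>(a,b,c). \<bar>a - b\<bar> powr p) es)"
    "y = sum_list (map (\<lambda>(a,b,c). \<bar>a - c\<bar> powr p) es)"
    "z = sum_list (map (\<lambda>(a,b,c). \<bar>b - c\<bar> powr p) es)"
  let ?es = "map (\<lambda>(a,b,c). (a,c,b)) es"
  have "y = sum_list (map (\<lambda>(a,b,c). \<bar>a - b\<bar> powr p) ?es)"
    unfolding h by (simp add: comp_def split_def)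
  moreover have "x = sum_list (map (\<lambda>(a,b,c). \<bar>a - c\<bar> powr p) ?es)"
    unfolding h by (simp add: comp_def split_def)
  moreover have "z = sum_list (map (\<lambda>(a,b,c). \<bar>b - c\<bar> powr p) ?es)"
    unfolding h by (simp add: comp_def split_def abs_minus_commute)
  ultimately show "\<exists>es :: (real \<times> real \<times> real) list.
     y = sum_list (map (\<lambda>(a,b,c). \<bar>a - b\<bar> powr p) es) \<and>
     x = sum_list (map (\<lambda>(a,b,c). \<bar>a - c\<bar> powr p) es) \<and>
     z = sum_list (map (\<lambda>(a,b,c). \<bar>b - c\<bar> powr p) es)" by blast
qed

lemma ach_deg:
  assumes p: "0 < p" and s: "0 \<le> s"
  shows "ach p s s 0"
proof -
  have "\<bar>s powr (1/p) - 0\<bar> powr p = s"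
    using p s by (simp add: powr_powr)
  then show ?thesis unfolding ach_def
    by (intro exI[of _ "[(s powr (1/p), 0, 0)]"]) simp
qed

lemma ach_tri:
  assumes p: "0 < p" and nn: "0 \<le> x" "0 \<le> y" "0 \<le> z"
    and t: "x \<le> y + z" "y \<le> x + z" "z \<le> x + y"
  shows "ach p x y z"
proof -
  define al where "al = (x + y - z) / 2"
  define be where "be = (x + z - y) / 2"
  define ga where "ga = (y + z - x) / 2"
  have 1: "ach p al al 0" using ach_deg[OF p] t by (simp add: al_def)
  have 2: "ach p be 0 be" using ach_swap23[OF ach_deg[OF p]] t by (simp add: be_def)
  have 3: "ach p 0 ga ga" using ach_swap12[OF ach_swap23[OF ach_deg[OF p]]] t by (simp add: ga_def)
  have "ach p (al + be + 0) (al + 0 + ga) (0 + be + ga)"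
    by (rule ach_add[OF ach_add[OF 1 2] 3])
  moreover have "al + be + 0 = x" "al + 0 + ga = y" "0 + be + ga = z"
    by (simp_all add: al_def be_def ga_def field_simps)
  ultimately show ?thesis by simp
qed

lemma ach_base:
  fixes d1 d2 d3 :: real
  assumes p: "0 < p" and p': "0 < p'" and reg: "p \<le> 1 \<or> p \<le> p'"
    and o: "d1 \<le> d2" "d2 \<le> d3"
  shows "ach p' (\<bar>d1 - d2\<bar> powr p) (\<bar>d1 - d3\<bar> powr p) (\<bar>d2 - d3\<bar> powr p)"
proof -
  define a where "a = d2 - d1"
  define b where "b = d3 - d2"
  have ab: "a \<ge> 0" "b \<ge> 0" using o by (auto simp: a_def b_def)
  have e: "\<bar>d1 - d2\<bar> = a" "\<bar>d1 - d3\<bar> = a + b" "\<bar>d2 - d3\<bar> = b"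
    using o by (auto simp: a_def b_def)
  show ?thesis
  proof (cases "p \<le> 1")
    case True
    have m1: "a powr p \<le> (a + b) powr p" "b powr p \<le> (a + b) powr p"
      using ab p by (auto intro!: powr_mono2)
    have "(a + b) powr p \<le> a powr p + b powr p" by (rule powr_subadd[OF p True ab])
    then have "ach p' (a powr p) ((a + b) powr p) (b powr p)"
      using m1 by (intro ach_tri[OF p']) auto
    then show ?thesis by (simp add: e)
  next
    case False
    then have p1: "1 < p" and pp: "p \<le> p'" using reg by auto
    define x where "x = a powr p"
    define y where "y = b powr p"
    define z where "z = (a + b) powr p"
    define X where "X = x powr (1/p')"
    define B where "B = y powr (1/p')"
    have X0: "X \<ge> 0" "B \<ge> 0" by (simp_all add: X_def B_def)
    define h where "h t = (X + t) powr p' - t powr p'" for t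
    have XX: "X powr p' = x" using p' by (simp add: X_def powr_powr x_def)
    have BB: "B powr p' = y" using p' by (simp add: B_def powr_powr y_def)
    have "(x + y) powr (1/p) \<le> x powr (1/p) + y powr (1/p)"
      by (rule powr_subadd) (use p1 in \<open>auto simp: x_def y_def\<close>)
    also have "\<dots> = a + b" using p ab by (simp add: x_def y_def powr_powr)
    finally have c1: "(x + y) powr (1/p) \<le> a + b" .
    have "((x + y) powr (1/p)) powr p \<le> (a + b) powr p"
      by (rule powr_mono2) (use p c1 in auto)
    then have sup: "x + y \<le> z" using p by (simp add: powr_powr z_def x_def y_def)
    have "(a + b) powr (p/p') \<le> a powr (p/p') + b powr (p/p')"
      by (rule powr_subadd) (use p p' pp ab in auto)
    also have "\<dots> = X + B" using p' by (simp add: X_def B_def x_def y_def powr_powr)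
    finally have c2: "(a + b) powr (p/p') \<le> X + B" .
    have "((a + b) powr (p/p')) powr p' \<le> (X + B) powr p'"
      by (rule powr_mono2) (use p' c2 in auto)
    then have zXB: "z \<le> (X + B) powr p'" using p' by (simp add: powr_powr z_def)
    have h0: "h 0 \<le> z - y" using XX sup by (simp add: h_def)
    have hB: "z - y \<le> h B" using zXB BB by (simp add: h_def)
    have c1: "continuous_on {0..B} (\<lambda>t. (X + t) powr p')"
      by (rule continuous_on_powr') (use X0 p' in \<open>auto intro: continuous_intros\<close>)
    have c2: "continuous_on {0..B} (\<lambda>t. t powr p')"
      by (rule continuous_on_powr') (use X0 p' in \<open>auto intro: continuous_intros\<close>)
    have "continuous_on {0..B} h" unfolding h_def by (rule continuous_on_diff[OF c1 c2])
    then obtain be where be: "0 \<le> be" "be \<le> B" "h be = z - y"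
      using IVT'[of h 0 "z - y" B] h0 hB X0 by auto
    define s where "s = y - be powr p'"
    have "be powr p' \<le> B powr p'" by (rule powr_mono2) (use p' be in auto)
    then have s0: "s \<ge> 0" using BB by (simp add: s_def)
    have 1: "ach p' 0 s s" using ach_swap12[OF ach_swap23[OF ach_deg[OF p' s0]]] .
    have ab3: "\<bar>0 - X\<bar> = X" "\<bar>0 - (X + be)\<bar> = X + be" "\<bar>X - (X + be)\<bar> = be"
      using X0 be by auto
    have 2: "ach p' x ((X + be) powr p') (be powr p')"
      unfolding ach_def
      by (rule exI[of _ "[(0, X, X + be)]"]) (simp only: list.map sum_list.Cons sum_list.Nil split ab3 XX add_0_right)
    have "ach p' (x + 0) ((X + be) powr p' + s) (be powr p' + s)"
      by (rule ach_add[OF 2 1])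
    moreover have "(X + be) powr p' + s = z" using be(3) by (simp add: h_def s_def)
    moreover have "be powr p' + s = y" by (simp add: s_def)
    ultimately have "ach p' x z y" by simp
    then show ?thesis by (simp add: e x_def y_def z_def)
  qed
qed

lemma ach_all:
  fixes d1 d2 d3 :: real
  assumes p: "0 < p" and p': "0 < p'" and reg: "p \<le> 1 \<or> p \<le> p'"
  shows "ach p' (\<bar>d1 - d2\<bar> powr p) (\<bar>d1 - d3\<bar> powr p) (\<bar>d2 - d3\<bar> powr p)"
proof -
  define P where "P d1 d2 d3 \<longleftrightarrow> ach p' (\<bar>d1 - d2\<bar> powr p) (\<bar>d1 - d3\<bar> powr p) (\<bar>d2 - d3\<bar> powr p)"
    for d1 d2 d3 :: real
  have base: "d1 \<le> d2 \<Longrightarrow> d2 \<le> d3 \<Longrightarrow> P d1 d2 d3" for d1 d2 d3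
    unfolding P_def by (rule ach_base[OF p p' reg])
  have s12: "P d1 d2 d3 \<Longrightarrow> P d2 d1 d3" for d1 d2 d3
    unfolding P_def by (drule ach_swap23) (simp add: abs_minus_commute)
  have s23: "P d1 d2 d3 \<Longrightarrow> P d1 d3 d2" for d1 d2 d3
    unfolding P_def by (drule ach_swap12) (simp add: abs_minus_commute)
  have "P d1 d2 d3"
  proof -
    consider "d1 \<le> d2" "d2 \<le> d3" | "d2 \<le> d1" "d1 \<le> d3" | "d1 \<le> d3" "d3 \<le> d2"
      | "d3 \<le> d1" "d1 \<le> d2" | "d2 \<le> d3" "d3 \<le> d1" | "d3 \<le> d2" "d2 \<le> d1" by linarith
    then show ?thesis
    proof cases
      case 1 then show ?thesis by (rule base)
    next
      case 2 then show ?thesis using s12[OF base[of d2 d1 d3]] by simp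
    next
      case 3 then show ?thesis using s23[OF base[of d1 d3 d2]] by simp
    next
      case 4 then show ?thesis using s23[OF s12[OF base[of d3 d1 d2]]] by simp
    next
      case 5 then show ?thesis using s12[OF s23[OF base[of d2 d3 d1]]] by simp
    next
      case 6 then show ?thesis using s12[OF s23[OF s12[OF base[of d3 d2 d1]]]] by simp
    qed
  qed
  then show ?thesis by (simp add: P_def)
qed


lemma diagr_diagc: "diagr d = diagc (\<lambda>i. of_real (d i))"
  by (simp add: diagr_def diagc_def)

lemma adjoint_entry: "adjoint_mat A $ i $ j = cnj (A $ j $ i)"
  by (simp add: adjoint_mat_def)

lemma sa_udu: "self_adjoint (U ** diagr d ** adjoint_mat U)"
  unfolding self_adjoint_def
  by (simp only: vec_eq_iff adjoint_entry[of "U ** diagr d ** adjoint_mat U"] udu_entry)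
     (simp add: cnj_sum mult_ac)

lemma unitary_mat1: "unitary (mat 1 :: complex^'n^'n)"
proof -
  have "adjoint_mat (mat 1 :: complex^'n^'n) = mat 1"
    by (simp add: vec_eq_iff adjoint_mat_def mat_def)
  then show ?thesis by (simp add: unitary_def)
qed

lemma adjoint_mat1: "adjoint_mat (mat 1 :: complex^'n^'n) = mat 1"
  by (simp add: vec_eq_iff adjoint_mat_def mat_def)

lemma spec_udu:
  assumes u: "unitary U"
  shows "finite (spectrum_mat (U ** diagr d ** adjoint_mat U))"
proof -
  have u1: "adjoint_mat U ** U = mat 1" and u2: "U ** adjoint_mat U = mat 1"
    using u by (auto simp: unitary_def)
  have "spectrum_mat (U ** diagr d ** adjoint_mat U) \<subseteq> range (\<lambda>k. complex_of_real (d k))"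
  proof
    fix c assume "c \<in> spectrum_mat (U ** diagr d ** adjoint_mat U)"
    then obtain v where v0: "v \<noteq> 0" and Bv: "(U ** diagr d ** adjoint_mat U) *v v = c *s v"
      by (auto simp: spectrum_mat_def)
    define u where "u = adjoint_mat U *v v"
    have "U *v u = v" by (simp add: u_def matrix_vector_mul_assoc u2)
    then have u0: "u \<noteq> 0" using v0 by auto
    have "adjoint_mat U *v ((U ** diagr d ** adjoint_mat U) *v v) = diagr d *v u"
      by (simp add: u_def matrix_vector_mul_assoc matrix_mul_assoc u1)
    then have du: "diagr d *v u = c *s u" by (simp add: Bv u_def vector_scalar_commute)
    obtain r where ur: "u $ r \<noteq> 0" using u0 by (auto simp: vec_eq_iff)
    have "of_real (d r) * u $ r = c * u $ r"
      by (metis du diagc_mult_vec vector_smult_component diagr_diagc)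
    then have "c = of_real (d r)" using ur by simp
    then show "c \<in> range (\<lambda>k. complex_of_real (d k))" by simp
  qed
  then show ?thesis by (rule finite_subset) simp
qed

lemma C_op_Cons: "C_op p (A # As) = abs_powr p (comm_op A) + C_op p As"
  by (simp add: C_op_def)

lemma C_op_Nil: "C_op p [] = 0"
  by (simp add: C_op_def)

lemma C_set_add: "X \<in> C_set p \<Longrightarrow> Y \<in> C_set p \<Longrightarrow> X + Y \<in> C_set p"
proof -
  assume "X \<in> C_set p" "Y \<in> C_set p"
  then obtain As Bs where "X = C_op p As" "\<forall>A\<in>set As. self_adjoint A \<and> finite (spectrum_mat A)"
    "Y = C_op p Bs" "\<forall>A\<in>set Bs. self_adjoint A \<and> finite (spectrum_mat A)"
    by (auto simp: C_set_def)
  then show ?thesis unfolding C_set_def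
    by (intro CollectI exI[of _ "As @ Bs"]) (auto simp: C_op_def)
qed

lemma C_set_zero: "0 \<in> C_set p"
  unfolding C_set_def by (intro CollectI exI[of _ "[]"]) (simp add: C_op_def)

lemma C_set_incl:
  assumes h: "\<And>A. self_adjoint A \<Longrightarrow> abs_powr p (comm_op A) \<in> C_set p'"
  shows "C_set p \<subseteq> C_set p'"
proof
  fix X assume "X \<in> C_set p"
  then obtain As where X: "X = C_op p As" and As: "\<forall>A\<in>set As. self_adjoint A \<and> finite (spectrum_mat A)"
    by (auto simp: C_set_def)
  have "C_op p As \<in> C_set p'" using As
  proof (induction As)
    case Nil then show ?case by (simp add: C_op_Nil C_set_zero)
  next
    case (Cons A As)
    then show ?case by (simp add: C_op_Cons C_set_add h)
  qed
  then show "X \<in> C_set p'" by (simp add: X)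
qed

lemma Gm_add: "Gm U (\<lambda>q. f q + g q) = Gm U f + Gm U g"
proof -
  have "diagc (\<lambda>q. complex_of_real (f q + g q)) = diagc (\<lambda>q. of_real (f q)) + diagc (\<lambda>q. of_real (g q))"
    by (simp add: vec_eq_iff diagc_def)
  then show ?thesis unfolding Gm_def
    by (simp add: matrix_add_ldistrib matrix_add_rdistrib)
qed

lemma Gm_zero: "Gm U (\<lambda>q. 0) = 0"
proof -
  have z: "diagc (\<lambda>q. 0) = (0::op33)" by (simp add: vec_eq_iff diagc_def)
  show ?thesis unfolding Gm_def of_real_0 z by (simp add: vec_eq_iff matrix_matrix_mult_def)
qed

lemma Gm_list:
  assumes u: "unitary U"
  shows "Gm U (\<lambda>q. sum_list (map (\<lambda>e. \<bar>e (fst q) - e (snd q)\<bar> powr p') ds))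
       = C_op p' (map (\<lambda>e. U ** diagr e ** adjoint_mat U) ds)"
proof (induction ds)
  case Nil then show ?case by (simp add: Gm_zero C_op_Nil)
next
  case (Cons e ds)
  have "Gm U (\<lambda>q. sum_list (map (\<lambda>e. \<bar>e (fst q) - e (snd q)\<bar> powr p') (e # ds)))
     = Gm U (\<lambda>q. \<bar>e (fst q) - e (snd q)\<bar> powr p') + Gm U (\<lambda>q. sum_list (map (\<lambda>e. \<bar>e (fst q) - e (snd q)\<bar> powr p') ds))"
    by (simp add: Gm_add)
  then show ?case using Cons by (simp add: C_op_Cons Tp[OF u])
qed

lemma Gm_list_in:
  assumes u: "unitary U"
  shows "Gm U (\<lambda>q. sum_list (map (\<lambda>e. \<bar>e (fst q) - e (snd q)\<bar> powr p') ds)) \<in> C_set p'"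
  unfolding Gm_list[OF u] C_set_def
  by (intro CollectI exI[of _ "map (\<lambda>e. U ** diagr e ** adjoint_mat U) ds"]) (auto simp: sa_udu spec_udu[OF u])

definition tf :: "real \<times> real \<times> real \<Rightarrow> 3 \<Rightarrow> real" where
  "tf t k = (if k = 1 then fst t else if k = 2 then fst (snd t) else snd (snd t))"

lemma single_in:
  assumes u: "unitary U" and p: "0 < p"
    and a: "ach p' (\<bar>d 1 - d 2\<bar> powr p) (\<bar>d 1 - d 3\<bar> powr p) (\<bar>d 2 - d 3\<bar> powr p)"
  shows "Gm U (\<lambda>q. \<bar>d (fst q) - d (snd q)\<bar> powr p) \<in> C_set p'"
proof -
  obtain es :: "(real \<times> real \<times> real) list" where
    e1: "\<bar>d 1 - d 2\<bar> powr p = sum_list (map (\<lambda>(a,b,c). \<bar>a - b\<bar> powr p') es)" and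
    e2: "\<bar>d 1 - d 3\<bar> powr p = sum_list (map (\<lambda>(a,b,c). \<bar>a - c\<bar> powr p') es)" and
    e3: "\<bar>d 2 - d 3\<bar> powr p = sum_list (map (\<lambda>(a,b,c). \<bar>b - c\<bar> powr p') es)"
    using a unfolding ach_def by blast
  define g where "g i j = sum_list (map (\<lambda>t. \<bar>tf t i - tf t j\<bar> powr p') es)" for i j
  have gsym: "g i j = g j i" for i j by (simp add: g_def abs_minus_commute)
  have gdiag: "g i i = 0" for i by (simp add: g_def)
  have g12: "g 1 2 = \<bar>d 1 - d 2\<bar> powr p" by (simp add: g_def e1 tf_def split_def)
  have g13: "g 1 3 = \<bar>d 1 - d 3\<bar> powr p" by (simp add: g_def e2 tf_def split_def)
  have g23: "g 2 3 = \<bar>d 2 - d 3\<bar> powr p" by (simp add: g_def e3 tf_def split_def)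
  have eq: "\<bar>d i - d j\<bar> powr p = g i j" for i j
    using exhaust_3[of i] exhaust_3[of j] g12 g13 g23 gsym gdiag
    by (auto simp: abs_minus_commute)
  have "(\<lambda>q. \<bar>d (fst q) - d (snd q)\<bar> powr p) =
        (\<lambda>q. sum_list (map (\<lambda>e. \<bar>e (fst q) - e (snd q)\<bar> powr p') (map tf es)))"
    by (simp add: eq g_def comp_def)
  then show ?thesis using Gm_list_in[OF u, of p' "map tf es"] by (simp only:)
qed

lemma incl_main:
  assumes p: "0 < p" and p': "0 < p'" and reg: "p \<le> 1 \<or> p \<le> p'"
  shows "C_set p \<subseteq> C_set p'"
proof (rule C_set_incl)
  fix A :: op3 assume "self_adjoint A"
  then obtain U d where u: "unitary U" and A: "A = U ** diagr d ** adjoint_mat U"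
    using spectral3 by blast
  show "abs_powr p (comm_op A) \<in> C_set p'"
    unfolding A Tp[OF u] by (rule single_in[OF u p ach_all[OF p p' reg]])
qed


lemma mult_if_zero: "(a::'a::mult_zero) * (if P then b else 0) = (if P then a * b else 0)" by simp

lemma diagc_entry: "(W ** diagc h ** adjoint_mat W) $ i $ j = (\<Sum>k\<in>UNIV. W$i$k * h k * cnj (W$j$k))"
proof -
  have "(W ** diagc h) $ i $ k = W$i$k * h k" for k
    by (simp add: matrix_matrix_mult_def diagc_def mult.commute if_mult_zero mult_if_zero)
  then show ?thesis by (simp add: matrix_matrix_mult_def adjoint_mat_def)
qed

lemma Gm_diag_re:
  "Re ((Gm U g) $ (i,j) $ (i,j)) = (\<Sum>k\<in>UNIV. \<Sum>l\<in>UNIV. g (k,l) * (cmod (U$i$k))^2 * (cmod (U$j$l))^2)"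
proof -
  have t: "kron U (conjm U) $ (i,j) $ s * complex_of_real (g s) * cnj (kron U (conjm U) $ (i,j) $ s)
      = of_real (g s * (cmod (U$i$(fst s)))^2 * (cmod (U$j$(snd s)))^2)" for s
  proof -
    define a where "a = U$i$(fst s)"
    define b where "b = U$j$(snd s)"
    have k: "kron U (conjm U) $ (i,j) $ s = a * cnj b" by (simp add: kron_def conjm_def a_def b_def)
    have "a * cnj a = of_real ((cmod a)^2)" "b * cnj b = of_real ((cmod b)^2)"
      by (metis complex_norm_square of_real_power)+
    have "kron U (conjm U) $ (i,j) $ s * complex_of_real (g s) * cnj (kron U (conjm U) $ (i,j) $ s)
        = of_real (g s) * (a * cnj a) * (b * cnj b)" unfolding k by (simp add: mult_ac)
    also have "\<dots> = of_real (g s * (cmod a)^2 * (cmod b)^2)"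
      using \<open>a * cnj a = _\<close> \<open>b * cnj b = _\<close> by simp
    finally show ?thesis by (simp add: a_def b_def)
  qed
  have "Re ((Gm U g) $ (i,j) $ (i,j)) = (\<Sum>s\<in>UNIV. g s * (cmod (U$i$(fst s)))^2 * (cmod (U$j$(snd s)))^2)"
    unfolding Gm_def diagc_entry t by simp
  also have "\<dots> = (\<Sum>s\<in>UNIV \<times> UNIV. g s * (cmod (U$i$(fst s)))^2 * (cmod (U$j$(snd s)))^2)"
    by (simp add: UNIV_Times_UNIV)
  also have "\<dots> = (\<Sum>k\<in>UNIV. \<Sum>l\<in>UNIV. g (k,l) * (cmod (U$i$k))^2 * (cmod (U$j$l))^2)"
    by (simp add: sum.cartesian_product split_def)
  finally show ?thesis .
qed

lemma rowsum:
  assumes u: "unitary U"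
  shows "(\<Sum>k\<in>UNIV. (cmod (U$i$k))^2) = 1"
proof -
  have "(U ** adjoint_mat U) $ i $ i = 1" using u by (simp add: unitary_def mat_def)
  then have "(\<Sum>k\<in>UNIV. U$i$k * cnj (U$i$k)) = 1"
    by (simp add: matrix_matrix_mult_def adjoint_mat_def)
  moreover have "U$i$k * cnj (U$i$k) = complex_of_real ((cmod (U$i$k))^2)" for k
    by (metis complex_norm_square of_real_power)
  ultimately have "(\<Sum>k\<in>UNIV. complex_of_real ((cmod (U$i$k))^2)) = 1"
    by simp
  then have "complex_of_real (\<Sum>k\<in>UNIV. (cmod (U$i$k))^2) = 1" by simp
  then show ?thesis using of_real_eq_1_iff by blast
qed

lemma triple_ineq:
  fixes a b c :: "'n::finite \<Rightarrow> real" and G :: "'n \<Rightarrow> 'n \<Rightarrow> real"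
  assumes nn: "\<And>k. a k \<ge> 0" "\<And>k. b k \<ge> 0" "\<And>k. c k \<ge> 0"
    and s: "sum a UNIV = 1" "sum b UNIV = 1" "sum c UNIV = 1"
    and G: "\<And>k l m. G k m \<le> K * (G k l + G l m)"
  shows "(\<Sum>k\<in>UNIV. \<Sum>m\<in>UNIV. G k m * a k * c m)
     \<le> K * ((\<Sum>k\<in>UNIV. \<Sum>l\<in>UNIV. G k l * a k * b l) + (\<Sum>l\<in>UNIV. \<Sum>m\<in>UNIV. G l m * b l * c m))"
proof -
  have L: "(\<Sum>k\<in>UNIV. \<Sum>m\<in>UNIV. G k m * a k * c m) = (\<Sum>k\<in>UNIV. \<Sum>m\<in>UNIV. \<Sum>l\<in>UNIV. G k m * a k * b l * c m)"
  proof -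
    have "G k m * a k * c m = (\<Sum>l\<in>UNIV. G k m * a k * b l * c m)" for k m
    proof -
      have "(\<Sum>l\<in>UNIV. G k m * a k * b l * c m) = G k m * a k * c m * sum b UNIV"
        by (simp add: sum_distrib_left mult_ac)
      then show ?thesis using s by simp
    qed
    then show ?thesis by simp
  qed
  have le: "(\<Sum>k\<in>UNIV. \<Sum>m\<in>UNIV. \<Sum>l\<in>UNIV. G k m * a k * b l * c m)
      \<le> (\<Sum>k\<in>UNIV. \<Sum>m\<in>UNIV. \<Sum>l\<in>UNIV. K * (G k l + G l m) * a k * b l * c m)"
  proof (intro sum_mono)
    fix k m l
    have "0 \<le> a k * b l * c m" using nn by simp
    then have "G k m * (a k * b l * c m) \<le> K * (G k l + G l m) * (a k * b l * c m)"
      using G by (rule mult_right_mono[rotated])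
    then show "G k m * a k * b l * c m \<le> K * (G k l + G l m) * a k * b l * c m"
      by (simp add: mult_ac)
  qed
  have R1: "(\<Sum>k\<in>UNIV. \<Sum>m\<in>UNIV. \<Sum>l\<in>UNIV. G k l * a k * b l * c m) = (\<Sum>k\<in>UNIV. \<Sum>l\<in>UNIV. G k l * a k * b l)"
  proof -
    have "(\<Sum>k\<in>UNIV. \<Sum>m\<in>UNIV. \<Sum>l\<in>UNIV. G k l * a k * b l * c m) = (\<Sum>k\<in>UNIV. \<Sum>l\<in>UNIV. \<Sum>m\<in>UNIV. G k l * a k * b l * c m)"
      by (rule sum.cong[OF refl], rule sum.swap)
    also have "\<dots> = (\<Sum>k\<in>UNIV. \<Sum>l\<in>UNIV. G k l * a k * b l * sum c UNIV)"
      by (simp add: sum_distrib_left)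
    finally show ?thesis using s by simp
  qed
  have R2: "(\<Sum>k\<in>UNIV. \<Sum>m\<in>UNIV. \<Sum>l\<in>UNIV. G l m * a k * b l * c m) = (\<Sum>l\<in>UNIV. \<Sum>m\<in>UNIV. G l m * b l * c m)"
  proof -
    have "(\<Sum>k\<in>UNIV. \<Sum>m\<in>UNIV. \<Sum>l\<in>UNIV. G l m * a k * b l * c m) = (\<Sum>m\<in>UNIV. \<Sum>l\<in>UNIV. \<Sum>k\<in>UNIV. G l m * a k * b l * c m)"
      by (subst sum.swap) (rule sum.cong[OF refl], rule sum.swap)
    also have "\<dots> = (\<Sum>m\<in>UNIV. \<Sum>l\<in>UNIV. G l m * b l * c m * sum a UNIV)"
      by (simp add: sum_distrib_left mult_ac)
    also have "\<dots> = (\<Sum>m\<in>UNIV. \<Sum>l\<in>UNIV. G l m * b l * c m)"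
      using s by simp
    also have "\<dots> = (\<Sum>l\<in>UNIV. \<Sum>m\<in>UNIV. G l m * b l * c m)"
      by (rule sum.swap)
    finally show ?thesis .
  qed
  have "(\<Sum>k\<in>UNIV. \<Sum>m\<in>UNIV. \<Sum>l\<in>UNIV. K * (G k l + G l m) * a k * b l * c m)
     = K * ((\<Sum>k\<in>UNIV. \<Sum>m\<in>UNIV. \<Sum>l\<in>UNIV. G k l * a k * b l * c m) + (\<Sum>k\<in>UNIV. \<Sum>m\<in>UNIV. \<Sum>l\<in>UNIV. G l m * a k * b l * c m))"
    by (simp add: sum_distrib_left sum.distrib algebra_simps)
  then show ?thesis using L le R1 R2 by simp
qed


definition phi :: "real \<Rightarrow> op33 \<Rightarrow> real" where
  "phi p X = Re (X$(1,3)$(1,3)) - Kc p * (Re (X$(1,2)$(1,2)) + Re (X$(2,3)$(2,3)))"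

lemma phi_add: "phi p (X + Y) = phi p X + phi p Y"
  by (simp add: phi_def algebra_simps)

lemma phi_zero: "phi p 0 = 0"
  by (simp add: phi_def)

lemma phi_single:
  assumes u: "unitary U" and p: "0 < p"
  shows "phi p (Gm U (\<lambda>q. \<bar>d (fst q) - d (snd q)\<bar> powr p)) \<le> 0"
proof -
  define mu where "mu i k = (cmod (U$i$k))^2" for i k
  have "(\<Sum>k\<in>UNIV. \<Sum>m\<in>UNIV. \<bar>d k - d m\<bar> powr p * mu 1 k * mu 3 m)
     \<le> Kc p * ((\<Sum>k\<in>UNIV. \<Sum>l\<in>UNIV. \<bar>d k - d l\<bar> powr p * mu 1 k * mu 2 l)
              + (\<Sum>l\<in>UNIV. \<Sum>m\<in>UNIV. \<bar>d l - d m\<bar> powr p * mu 2 l * mu 3 m))"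
    by (rule triple_ineq) (auto simp: mu_def rowsum[OF u] tri_powr[OF p])
  then show ?thesis
    by (simp add: phi_def Gm_diag_re mu_def)
qed

lemma phi_all:
  assumes p: "0 < p" and X: "X \<in> C_set p"
  shows "phi p X \<le> 0"
proof -
  obtain As where X: "X = C_op p As" and As: "\<forall>A\<in>set As. self_adjoint A \<and> finite (spectrum_mat A)"
    using X by (auto simp: C_set_def)
  have "phi p (C_op p As) \<le> 0" using As
  proof (induction As)
    case Nil then show ?case by (simp add: C_op_Nil phi_zero)
  next
    case (Cons A As)
    then have "self_adjoint A" by simp
    then obtain U d where u: "unitary U" and A: "A = U ** diagr d ** adjoint_mat U"
      using spectral3 by blast
    have "phi p (abs_powr p (comm_op A)) \<le> 0"
      unfolding A Tp[OF u] by (rule phi_single[OF u p])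
    then show ?case using Cons by (simp add: C_op_Cons phi_add)
  qed
  then show ?thesis by (simp add: X)
qed

lemma Gm_mat1_diag: "Re ((Gm (mat 1) g) $ (i,j) $ (i,j)) = g (i,j)"
proof -
  have "(cmod ((mat 1 :: op3) $ a $ b))^2 = (if a = b then 1 else 0)" for a b
    by (simp add: mat_def)
  then show ?thesis
    by (simp add: Gm_diag_re if_mult_zero mult_if_zero)
qed

lemma noncontain:
  assumes p: "0 < p" and pp: "p < p'" and p1: "1 < p'"
  shows "\<not> C_set p' \<subseteq> C_set p"
proof
  assume sub: "C_set p' \<subseteq> C_set p"
  define d0 :: "3 \<Rightarrow> real" where "d0 k = (if k = 1 then 0 else if k = 2 then 1 else 2)" for k
  define B where "B = (mat 1 :: op3) ** diagr d0 ** adjoint_mat (mat 1)"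
  define X0 where "X0 = C_op p' [B]"
  have sB: "self_adjoint B \<and> finite (spectrum_mat B)"
    unfolding B_def using sa_udu spec_udu[OF unitary_mat1] by blast
  have "X0 \<in> C_set p'" unfolding C_set_def X0_def
    by (intro CollectI exI[of _ "[B]"]) (simp add: sB)
  then have "X0 \<in> C_set p" using sub by blast
  then have le: "phi p X0 \<le> 0" by (rule phi_all[OF p])
  have X0: "X0 = Gm (mat 1) (\<lambda>q. \<bar>d0 (fst q) - d0 (snd q)\<bar> powr p')"
    unfolding X0_def C_op_Cons C_op_Nil B_def Tp[OF unitary_mat1] by simp
  have "(1::3) \<noteq> 2" "(1::3) \<noteq> 3" "(2::3) \<noteq> 3" by simp_all
  then have ph: "phi p X0 = 2 powr p' - Kc p * 2"
    by (simp add: phi_def X0 Gm_mat1_diag d0_def)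
  have a: "2 powr 1 < (2::real) powr p'" using p1 by (simp only: powr_less_cancel_iff)
  have b: "(2::real) powr p < 2 powr p'" using pp by simp
  have "2 powr p = 2 * (2::real) powr (p - 1)" by (simp add: powr_diff)
  then have "Kc p * 2 < 2 powr p'" using a b by (auto simp: Kc_def)
  then show False using le ph by simp
qed

theorem corollary4p11:
  shows "(\<forall>p p'. 0 < p \<and> p \<le> 1 \<and> 0 < p' \<and> p' \<le> 1 \<longrightarrow> C_set p = C_set p') \<and>
         (\<forall>p p'. 1 < p' \<and> 0 < p \<and> p < p' \<longrightarrow> C_set p \<subseteq> C_set p' \<and> \<not> (C_set p' \<subseteq> C_set p))"
proof (rule conjI; intro allI impI)
  fix p p' :: real
  assume h: "0 < p \<and> p \<le> 1 \<and> 0 < p' \<and> p' \<le> 1"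
  show "C_set p = C_set p'"
    using incl_main[of p p'] incl_main[of p' p] h by auto
next
  fix p p' :: real
  assume h: "1 < p' \<and> 0 < p \<and> p < p'"
  show "C_set p \<subseteq> C_set p' \<and> \<not> (C_set p' \<subseteq> C_set p)"
    using incl_main[of p p'] noncontain[of p p'] h by auto
qed


end
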